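(* Let $f:[0,1]\times\mathbb{R}\to\mathbb{R}$ be continuous with continuous partial derivative $f_x$ with respect to the second variable, suppose there exist positive constants $A,B$ with $A<1$ such that $|f(t,x)|\leqslant A|x|+B$ for all $t\in[0,1]$, $x\in\mathbb{R}$, suppose $\inf_{[0,1]\times\mathbb{R}}f_x>-1$, and let $v:[0,1]\to\mathbb{R}$ be continuous. For $N\in\mathbb{N}$, $N\geqslant2$, let $x_N:\{0,\dots,N\}\to\mathbb{R}$ be the unique solution of $$\Delta^2x(k-1)=\tfrac{1}{N^2}f\left(\tfrac kN,x(k)\right)+\tfrac{1}{N^2}v\left(\tfrac kN\right),\ k=1,\dots,N-1,\qquad x(0)=x(N)=0.$$ Then there exists a constant $M>0$ such that $|x_N(k)|\leqslant M$ for every $N\geqslant2$ and every $k\in\{0,\dots,N\}$.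
   Context: $\Delta x(k-1)=x(k)-x(k-1)$, $\Delta^2x(k-1)=x(k+1)-2x(k)+x(k-1)$. *)

theory Defs
  imports "HOL-Analysis.Analysis"
begin

end

theory Submission
  imports Defs "HOL-Analysis.Analysis"
begin

lemma concave_nonneg:
  fixes u :: "nat \<Rightarrow> real"
  assumes c: "\<And>k. 1 \<le> k \<Longrightarrow> k \<le> N-1 \<Longrightarrow> u (k+1) - 2 * u k + u (k-1) \<le> 0"
    and u0: "u 0 = 0" and uN: "u N = 0" and kN: "k \<le> N"
  shows "u k \<ge> 0"
proof (cases "k = 0")
  case True then show ?thesis using u0 by simp
next
  case False
  then have k1: "1 \<le> k" by simp
  have mono: "u (Suc j) - u j \<le> u (Suc i) - u i" if "i \<le> j" "j < N" for i j
    using that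
  proof (induction j rule: dec_induct)
    case base then show ?case by simp
  next
    case (step j)
    have "u (Suc j + 1) - 2 * u (Suc j) + u (Suc j - 1) \<le> 0"
      using c[of "Suc j"] step.prems by simp
    then have "u (Suc (Suc j)) - u (Suc j) \<le> u (Suc j) - u j" by simp
    with step show ?case by simp
  qed
  define d where "d = u k - u (k-1)"
  have low: "u j \<ge> real j * d" if "j \<le> k" for j
    using that
  proof (induction j)
    case 0 then show ?case using u0 by simp
  next
    case (Suc j)
    have "u (Suc (k-1)) - u (k-1) \<le> u (Suc j) - u j"
      using mono[of j "k-1"] Suc.prems kN by simp
    then have "d \<le> u (Suc j) - u j" using k1 by (simp add: d_def)
    with Suc show ?case by (simp add: algebra_simps)
  qed
  have up: "u j - u k \<le> real (j - k) * d" if "k \<le> j" "j \<le> N" for j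
    using that
  proof (induction j rule: dec_induct)
    case base then show ?case by simp
  next
    case (step j)
    have "u (Suc j) - u j \<le> u (Suc (k-1)) - u (k-1)"
      using mono[of "k-1" j] step k1 by simp
    then have "u (Suc j) - u j \<le> d" using k1 by (simp add: d_def)
    moreover have "real (Suc j - k) = real (j - k) + 1" using step by simp
    ultimately show ?case using step by (simp add: algebra_simps)
  qed
  have a: "u k \<ge> real k * d" using low by simp
  have b: "- u k \<le> real (N - k) * d" using up[of N] kN uN by simp
  have "real (N - k) * u k \<ge> real (N - k) * (real k * d)"
    by (rule mult_left_mono[OF a]) simp
  moreover have "real k * (- u k) \<le> real k * (real (N - k) * d)"
    by (rule mult_left_mono[OF b]) simp
  ultimately have "real N * u k \<ge> 0" using kN
    by (simp add: of_nat_diff algebra_simps)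
  moreover have "real N > 0" using k1 kN by simp
  ultimately show ?thesis by (simp add: zero_le_mult_iff)
qed

lemma bvp_bound:
  fixes x :: "nat \<Rightarrow> real"
  assumes h: "\<And>k. 1 \<le> k \<Longrightarrow> k \<le> N-1 \<Longrightarrow> \<bar>x (k+1) - 2 * x k + x (k-1)\<bar> \<le> D / real N ^ 2"
    and D: "D \<ge> 0" and N: "N \<ge> 2"
    and x0: "x 0 = 0" and xN: "x N = 0" and kN: "k \<le> N"
  shows "\<bar>x k\<bar> \<le> D / 8"
proof -
  define \<phi> where "\<phi> j = D / (2 * real N ^ 2) * (real j * (real N - real j))" for j
  have Npos: "real N > 0" using N by simp
  have phi2: "\<phi> (j+1) - 2 * \<phi> j + \<phi> (j-1) = - D / real N ^ 2" if "1 \<le> j" for j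
  proof -
    have "real (j - 1) = real j - 1" using that by simp
    then show ?thesis using Npos unfolding \<phi>_def by (simp add: field_simps power2_eq_square)
  qed
  have phib: "\<phi> j \<le> D / 8" for j
  proof -
    have "4 * (real j * (real N - real j)) \<le> real N ^ 2"
      using sum_squares_ge_zero[of "real N - 2 * real j" 0]
      by (simp add: power2_eq_square algebra_simps)
    hence "D * (4 * (real j * (real N - real j))) \<le> D * real N ^ 2"
      using D by (rule mult_left_mono)
    then show ?thesis using Npos unfolding \<phi>_def by (simp add: field_simps)
  qed
  have p0: "\<phi> 0 = 0" "\<phi> N = 0" by (simp_all add: \<phi>_def)
  have u1: "x k + \<phi> k \<ge> 0"
  proof (rule concave_nonneg[where u = "\<lambda>j. x j + \<phi> j" and N = N])
    fix j assume j: "1 \<le> j" "j \<le> N - 1"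
    have "x (j+1) - 2 * x j + x (j-1) \<le> D / real N ^ 2" using h[OF j] by simp
    then show "x (j+1) + \<phi> (j+1) - 2 * (x j + \<phi> j) + (x (j-1) + \<phi> (j-1)) \<le> 0"
      using phi2[OF j(1)] by simp
  qed (use x0 xN p0 kN in auto)
  have u2: "- x k + \<phi> k \<ge> 0"
  proof (rule concave_nonneg[where u = "\<lambda>j. - x j + \<phi> j" and N = N])
    fix j assume j: "1 \<le> j" "j \<le> N - 1"
    have "-(x (j+1) - 2 * x j + x (j-1)) \<le> D / real N ^ 2" using h[OF j] by simp
    then show "- x (j+1) + \<phi> (j+1) - 2 * (- x j + \<phi> j) + (- x (j-1) + \<phi> (j-1)) \<le> 0"
      using phi2[OF j(1)] by simp
  qed (use x0 xN p0 kN in auto)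
  show ?thesis using u1 u2 phib[of k] by simp
qed

theorem lemma12:
  fixes f fx :: "real \<Rightarrow> real \<Rightarrow> real" and v :: "real \<Rightarrow> real" and A B :: real
  assumes f_cont: "continuous_on ({0..1} \<times> UNIV) (\<lambda>(t, x). f t x)"
    and f_deriv: "\<And>t x. t \<in> {0..1} \<Longrightarrow> ((\<lambda>y. f t y) has_real_derivative fx t x) (at x)"
    and fx_cont: "continuous_on ({0..1} \<times> UNIV) (\<lambda>(t, x). fx t x)"
    and A_pos: "0 < A" and A_lt1: "A < 1" and B_pos: "0 < B"
    and growth: "\<And>t x. t \<in> {0..1} \<Longrightarrow> \<bar>f t x\<bar> \<le> A * \<bar>x\<bar> + B"
    and fx_inf: "\<exists>c > -1. \<forall>t\<in>{0..1}. \<forall>x. c \<le> fx t x"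
    and v_cont: "continuous_on {0..1} v"
  shows "\<exists>M > 0. \<forall>N::nat. \<forall>x::nat \<Rightarrow> real. N \<ge> 2 \<longrightarrow>
           (\<forall>k\<in>{1..N-1}. x (k+1) - 2 * x k + x (k-1)
               = 1 / real N ^ 2 * f (real k / real N) (x k) + 1 / real N ^ 2 * v (real k / real N))
           \<longrightarrow> x 0 = 0 \<longrightarrow> x N = 0 \<longrightarrow> (\<forall>k\<in>{0..N}. \<bar>x k\<bar> \<le> M)"
proof -
  obtain V where V: "V \<ge> 0" "\<And>t. t \<in> {0..1} \<Longrightarrow> norm (v t) \<le> V"
    using continuous_on_compact_bound[OF compact_Icc v_cont] by blast
  define C where "C = B + V"
  have Cpos: "C > 0" using V B_pos by (simp add: C_def)
  define M where "M = C / (8 - A)"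
  have Mpos: "M > 0" using Cpos A_lt1 by (simp add: M_def)
  show ?thesis
  proof (intro exI[of _ M] conjI allI impI)
    show "M > 0" by fact
    fix N :: nat and x :: "nat \<Rightarrow> real"
    assume N: "N \<ge> 2"
      and eq: "\<forall>k\<in>{1..N-1}. x (k+1) - 2 * x k + x (k-1)
               = 1 / real N ^ 2 * f (real k / real N) (x k) + 1 / real N ^ 2 * v (real k / real N)"
      and x0: "x 0 = 0" and xN: "x N = 0"
    define m where "m = Max ((\<lambda>k. \<bar>x k\<bar>) ` {0..N})"
    have mge: "\<bar>x k\<bar> \<le> m" if "k \<le> N" for k
      unfolding m_def using that by (intro Max_ge) auto
    have m0: "m \<ge> 0" using mge[of 0] by simp
    define D where "D = A * m + C"
    have D0: "D \<ge> 0" using m0 A_pos Cpos by (simp add: D_def)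
    have Npos: "real N > 0" using N by simp
    have hb: "\<bar>x (k+1) - 2 * x k + x (k-1)\<bar> \<le> D / real N ^ 2"
      if k: "1 \<le> k" "k \<le> N-1" for k
    proof -
      have t: "real k / real N \<in> {0..1}" using k Npos by (simp add: field_simps)
      have "\<bar>f (real k / real N) (x k)\<bar> \<le> A * \<bar>x k\<bar> + B" using growth[OF t] .
      also have "\<dots> \<le> A * m + B" using mge[of k] k A_pos by (simp add: mult_left_mono)
      finally have F: "\<bar>f (real k / real N) (x k)\<bar> \<le> A * m + B" .
      have G: "\<bar>v (real k / real N)\<bar> \<le> V" using V(2)[OF t] by simp
      have "x (k+1) - 2 * x k + x (k-1) = (f (real k / real N) (x k) + v (real k / real N)) / real N ^ 2"
        using eq k by (simp add: field_simps)
      also have "\<bar>\<dots>\<bar> \<le> D / real N ^ 2"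
        using F G Npos by (simp add: D_def C_def abs_divide divide_right_mono)
      finally show ?thesis .
    qed
    have xb: "\<bar>x k\<bar> \<le> D / 8" if "k \<le> N" for k
      using bvp_bound[OF hb D0 N x0 xN that] by simp
    have "m \<in> (\<lambda>k. \<bar>x k\<bar>) ` {0..N}" unfolding m_def by (intro Max_in) auto
    then obtain k0 where "k0 \<le> N" "m = \<bar>x k0\<bar>" by auto
    then have "m \<le> D / 8" using xb by simp
    then have "(8 - A) * m \<le> C" by (simp add: D_def algebra_simps)
    then have mM: "m \<le> M" using A_lt1 by (simp add: M_def field_simps)
    show "\<forall>k\<in>{0..N}. \<bar>x k\<bar> \<le> M" using mge mM by force
  qed
qed

end
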